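(* Let $f,\lambda,\alpha,\beta>0$ be reals and let $G$ be a finite graph with at least one vertex, of maximum degree $\Delta\ge1$, in which the subgraph induced by the neighbourhood of every vertex has at most $\Delta^2/f$ edges. Let $\mathbf{I}$ be an independent set drawn from the hard-core model at fugacity $\lambda$ on $G$. Then for every $v\in V(G)$, \[ \alpha \Pr(v\in\mathbf{I}) + \beta\,\mathbb{E}|N(v)\cap \mathbf{I}| \ge \frac{\lambda}{1+\lambda}\min_{z\ge0}\left(\alpha(1+\lambda)^{-z} + \beta z(1+\lambda)^{-\frac{2\Delta^2}{fz}}\right)\,. \] Moreover, \[ \frac{1}{|V(G)|}\mathbb{E}|\mathbf{I}| \ge \min_{z>0}\max\left\{\frac{\lambda}{1+\lambda}(1+\lambda)^{-z},\ \frac{\lambda}{1+\lambda}\frac{z}{\Delta}(1+\lambda)^{-\frac{2\Delta^2}{fz}}\right\}\,. \]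
   Context: For a graph $G$ with set $\mathcal{I}(G)$ of independent sets (including the empty set) and $\lambda>0$, the hard-core model on $G$ at fugacity $\lambda$ is the probability distribution on $\mathcal{I}(G)$ with $\Pr(\mathbf{I}=I)=\lambda^{|I|}/Z_G(\lambda)$, where $Z_G(\lambda)=\sum_{I\in\mathcal{I}(G)}\lambda^{|I|}$. In the first inequality, the term $z(1+\lambda)^{-2\Delta^2/(fz)}$ at $z=0$ is interpreted as its limit $0$. *)

theory Defs
  imports Complex_Main
begin

definition fin_graph :: "'a set \<Rightarrow> ('a \<Rightarrow> 'a \<Rightarrow> bool) \<Rightarrow> bool" where
  "fin_graph V E \<longleftrightarrow> finite V \<and> (\<forall>x y. E x y \<longrightarrow> x \<in> V \<and> y \<in> V)
     \<and> (\<forall>x y. E x y \<longrightarrow> E y x) \<and> (\<forall>x. \<not> E x x)"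

definition nbhd :: "'a set \<Rightarrow> ('a \<Rightarrow> 'a \<Rightarrow> bool) \<Rightarrow> 'a \<Rightarrow> 'a set" where
  "nbhd V E v = {u \<in> V. E v u}"

definition max_degree :: "'a set \<Rightarrow> ('a \<Rightarrow> 'a \<Rightarrow> bool) \<Rightarrow> nat" where
  "max_degree V E = Max ((\<lambda>v. card (nbhd V E v)) ` V)"

definition induced_edges :: "('a \<Rightarrow> 'a \<Rightarrow> bool) \<Rightarrow> 'a set \<Rightarrow> nat" where
  "induced_edges E S = card {{x, y} | x y. x \<in> S \<and> y \<in> S \<and> E x y}"

definition indep_sets :: "'a set \<Rightarrow> ('a \<Rightarrow> 'a \<Rightarrow> bool) \<Rightarrow> 'a set set" where
  "indep_sets V E = {I. I \<subseteq> V \<and> (\<forall>x\<in>I. \<forall>y\<in>I. \<not> E x y)}"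

definition hc_Z :: "'a set \<Rightarrow> ('a \<Rightarrow> 'a \<Rightarrow> bool) \<Rightarrow> real \<Rightarrow> real" where
  "hc_Z V E lam = (\<Sum>I\<in>indep_sets V E. lam ^ card I)"

definition hc_expect :: "'a set \<Rightarrow> ('a \<Rightarrow> 'a \<Rightarrow> bool) \<Rightarrow> real \<Rightarrow> ('a set \<Rightarrow> real) \<Rightarrow> real" where
  "hc_expect V E lam X = (\<Sum>I\<in>indep_sets V E. lam ^ card I * X I) / hc_Z V E lam"

definition hc_prob :: "'a set \<Rightarrow> ('a \<Rightarrow> 'a \<Rightarrow> bool) \<Rightarrow> real \<Rightarrow> ('a set \<Rightarrow> bool) \<Rightarrow> real" where
  "hc_prob V E lam P = hc_expect V E lam (\<lambda>I. if P I then 1 else 0)"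

end

theory Submission
  imports Defs "HOL-Analysis.Convex"
begin


lemma convex_exp_lin: "convex_on UNIV (\<lambda>x::real. exp (k * x))"
proof (rule f''_ge0_imp_convex[where f' = "\<lambda>x. exp (k*x) * k" and f'' = "\<lambda>x. exp (k*x) * k * k"])
  fix x :: real
  show "DERIV (\<lambda>x. exp (k * x)) x :> exp (k*x) * k" by (auto intro!: derivative_eq_intros)
  show "DERIV (\<lambda>x. exp (k * x) * k) x :> exp (k*x) * k * k" by (auto intro!: derivative_eq_intros)
  show "0 \<le> exp (k*x) * k * k" by (simp add: mult.assoc)
qed simp

lemma powr_exp_form: "(q::real) > 0 \<Longrightarrow> q powr (- (c * x)) = exp ((- c * ln q) * x)"
  by (simp add: powr_def)

lemma convex_A: assumes "(q::real) > 0" shows "convex_on {0..} (\<lambda>z. q powr (- z))"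
proof -
  have "convex_on UNIV (\<lambda>z. exp ((- 1 * ln q) * z))" by (rule convex_exp_lin)
  then have "convex_on UNIV (\<lambda>z. q powr (- z))"
    using powr_exp_form[OF assms, of 1] by simp
  then show ?thesis using convex_on_subset by blast
qed

lemma convex_B: assumes q: "(q::real) \<ge> 1" and C: "C \<ge> 0"
  shows "convex_on {0..} (\<lambda>z. z * q powr (- (C / z)))"
proof (rule convex_onI)
  show "convex {0::real..}" by simp
  define h where "h = (\<lambda>s::real. q powr (- (C * s)))"
  have hc: "convex_on UNIV h"
    unfolding h_def using powr_exp_form[of q C] q convex_exp_lin[of "- C * ln q"] by simp
  have key: "z * q powr (- (C / z)) = z * h (1/z)" for z by (simp add: h_def)
  fix t x y :: real assume t: "0 < t" "t < 1" and x: "x \<in> {0..}" and y: "y \<in> {0..}"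
  let ?z = "(1 - t) *\<^sub>R x + t *\<^sub>R y"
  have mono: "u * q powr (- (C / u)) \<le> u * q powr (- (C / w))" if "0 < u" "u \<le> w" for u w
  proof -
    have "C / w \<le> C / u" using that C by (simp add: frac_le)
    then show ?thesis using that q by (intro mult_left_mono powr_mono) auto
  qed
  consider "x = 0" "y = 0" | "x = 0" "y > 0" | "x > 0" "y = 0" | "x > 0" "y > 0"
    using x y by force
  then show "?z * q powr (- (C / ?z)) \<le> (1 - t) * (x * q powr (- (C / x))) + t * (y * q powr (- (C / y)))"
  proof cases
    case 1 then show ?thesis by simp
  next
    case 2
    have "t * y * q powr (- (C / (t * y))) \<le> t * y * q powr (- (C / y))"
      using mono[of "t*y" y] t 2 by (simp add: mult_le_cancel_right1)
    then show ?thesis using 2 by (simp add: mult.assoc)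
  next
    case 3
    have "(1-t) * x * q powr (- (C / ((1-t) * x))) \<le> (1-t) * x * q powr (- (C / x))"
      using mono[of "(1-t)*x" x] t 3 by (simp add: mult_le_cancel_right1)
    then show ?thesis using 3 by (simp add: mult.assoc)
  next
    case 4
    define z where "z = (1 - t) * x + t * y"
    have zpos: "z > 0" using 4 t unfolding z_def by (simp add: add_pos_pos)
    define a where "a = (1 - t) * x / z"
    have a01: "0 \<le> a" "a \<le> 1" using zpos 4 t unfolding a_def z_def by (auto simp: field_simps)
    have "1 - a = t * y / z" using zpos unfolding a_def z_def by (simp add: field_simps)
    have "(1 - a) * (1 / y) + a * (1 / x) = t / z + (1 - t) / z"
      using zpos 4 \<open>1 - a = t * y / z\<close> unfolding a_def by (simp add: field_simps)
    also have "\<dots> = 1 / z" unfolding add_divide_distrib[symmetric] by simp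
    finally have inv: "1 / z = (1 - a) *\<^sub>R (1 / y) + a *\<^sub>R (1 / x)" by simp
    have "h (1/z) \<le> (1 - a) * h (1/y) + a * h (1/x)"
      unfolding inv using convex_onD[OF hc, of a "1/y" "1/x"] a01 by simp
    then have "z * h (1/z) \<le> z * ((1 - a) * h (1/y) + a * h (1/x))"
      using zpos by simp
    also have "\<dots> = t * (y * h (1/y)) + (1 - t) * (x * h (1/x))"
      using zpos \<open>1 - a = t * y / z\<close> unfolding a_def by (simp add: field_simps)
    finally show ?thesis unfolding key z_def[symmetric] by (simp add: z_def add.commute)
  qed
qed

lemma jensen_w:
  fixes p y :: "'i \<Rightarrow> real" and \<phi> :: "real \<Rightarrow> real"
  assumes cv: "convex_on {0..} \<phi>" and fin: "finite A"
    and p: "\<And>i. i \<in> A \<Longrightarrow> p i \<ge> 0" and y: "\<And>i. i \<in> A \<Longrightarrow> y i \<ge> 0"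
    and P: "sum p A > 0"
  shows "sum p A * \<phi> ((\<Sum>i\<in>A. p i * y i) / sum p A) \<le> (\<Sum>i\<in>A. p i * \<phi> (y i))"
proof -
  have ne: "A \<noteq> {}" using P by auto
  have c: "\<phi> (\<Sum>i\<in>A. (p i / sum p A) *\<^sub>R y i) \<le> (\<Sum>i\<in>A. (p i / sum p A) * \<phi> (y i))"
    using P p y by (intro convex_on_sum[OF fin ne cv]) (auto simp: sum_divide_distrib[symmetric])
  have e1: "(\<Sum>i\<in>A. (p i / sum p A) *\<^sub>R y i) = (\<Sum>i\<in>A. p i * y i) / sum p A"
    by (simp add: sum_divide_distrib)
  have e2: "(\<Sum>i\<in>A. (p i / sum p A) * \<phi> (y i)) = (\<Sum>i\<in>A. p i * \<phi> (y i)) / sum p A"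
    by (simp add: sum_divide_distrib)
  have "\<phi> ((\<Sum>i\<in>A. p i * y i) / sum p A) \<le> (\<Sum>i\<in>A. p i * \<phi> (y i)) / sum p A"
    using c unfolding e1 e2 .
  then show ?thesis using P by (simp add: pos_le_divide_eq mult.commute)
qed

lemma jensen_pair:
  fixes p q y :: "'i \<Rightarrow> real" and \<phi> :: "real \<Rightarrow> real"
  assumes cv: "convex_on {0..} \<phi>" and fin: "finite A"
    and p: "\<And>i. i \<in> A \<Longrightarrow> p i \<ge> 0" and q: "\<And>i. i \<in> A \<Longrightarrow> q i \<ge> 0"
    and y: "\<And>i. i \<in> A \<Longrightarrow> y i \<ge> 0"
    and P: "(\<Sum>i\<in>A. p i + q i) > 0"
  shows "(\<Sum>i\<in>A. p i + q i) * \<phi> ((\<Sum>i\<in>A. p i * y i) / (\<Sum>i\<in>A. p i + q i))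
         \<le> (\<Sum>i\<in>A. p i * \<phi> (y i) + q i * \<phi> 0)"
proof -
  define pp where "pp = (\<lambda>(i, b::bool). if b then q i else p i)"
  define yy where "yy = (\<lambda>(i, b::bool). if b then 0 else y i)"
  have s: "(\<Sum>x\<in>A \<times> UNIV. g x) = (\<Sum>i\<in>A. g (i, False) + g (i, True))" for g :: "'i \<times> bool \<Rightarrow> real"
  proof -
    have "(\<Sum>i\<in>A. \<Sum>b\<in>UNIV. g (i,b)) = sum g (A \<times> UNIV)" by (simp add: sum.cartesian_product)
    then show ?thesis by (simp add: UNIV_bool)
  qed
  have "sum pp (A \<times> UNIV) * \<phi> ((\<Sum>x\<in>A \<times> UNIV. pp x * yy x) / sum pp (A \<times> UNIV))
        \<le> (\<Sum>x\<in>A \<times> UNIV. pp x * \<phi> (yy x))"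
    apply (rule jensen_w[OF cv])
    using fin p q y P by (auto simp: pp_def yy_def s add.commute)
  then show ?thesis by (simp add: s pp_def yy_def add.commute)
qed



lemma ind_sub: "indep_sets U E \<subseteq> Pow U"
  by (auto simp: indep_sets_def)

lemma fin_ind: "finite U \<Longrightarrow> finite (indep_sets U E)"
  using ind_sub finite_subset by (metis finite_Pow_iff)

lemma empty_ind: "{} \<in> indep_sets U E"
  by (simp add: indep_sets_def)

lemma Z_ge1: assumes "finite U" "lam \<ge> 0" shows "1 \<le> hc_Z U E lam"
proof -
  have "(\<Sum>I\<in>indep_sets U E. lam ^ card I) = lam ^ card ({}::'a set) + (\<Sum>I\<in>indep_sets U E - {{}}. lam ^ card I)"
    by (rule sum.remove[OF fin_ind[OF assms(1)] empty_ind])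
  moreover have "(\<Sum>I\<in>indep_sets U E - {{}}. lam ^ card I) \<ge> 0"
    using assms by (intro sum_nonneg) auto
  ultimately show ?thesis by (simp add: hc_Z_def)
qed

lemma sum_Pow_pow: "finite N \<Longrightarrow> (\<Sum>T\<in>Pow N. (lam::real) ^ card T) = (1 + lam) ^ card N"
  using prod_add[of N "\<lambda>_. lam" "\<lambda>_. 1"] by (simp add: add.commute)

lemma Z_le_pow: assumes "finite U" "lam \<ge> 0" shows "hc_Z U E lam \<le> (1 + lam) ^ card U"
proof -
  have "hc_Z U E lam \<le> (\<Sum>T\<in>Pow U. lam ^ card T)"
    unfolding hc_Z_def using assms ind_sub by (intro sum_mono2) auto
  then show ?thesis using sum_Pow_pow assms by metis
qed

lemma Z_split: assumes U: "finite U" and N: "N \<subseteq> U" and lam: "lam \<ge> 0"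
  shows "hc_Z U E lam \<le> hc_Z (U - N) E lam * (1 + lam) ^ card N"
proof -
  define h where "h = (\<lambda>K. (K - N, K \<inter> N))"
  have finN: "finite N" using U N finite_subset by blast
  have inj: "inj_on h (indep_sets U E)"
    by (rule inj_onI) (auto simp: h_def)
  have img: "h ` indep_sets U E \<subseteq> indep_sets (U - N) E \<times> Pow N"
    by (auto simp: h_def indep_sets_def)
  have "hc_Z U E lam = (\<Sum>K\<in>indep_sets U E. lam ^ card (K - N) * lam ^ card (K \<inter> N))"
    unfolding hc_Z_def
  proof (rule sum.cong[OF refl])
    fix K assume K: "K \<in> indep_sets U E"
    then have "K \<subseteq> U" by (auto simp: indep_sets_def)
    then have fK: "finite K" using finite_subset U by auto
    have "card K = card (K - N) + card (K \<inter> N)"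
      using card_Int_Diff[OF fK, of N] by simp
    then show "lam ^ card K = lam ^ card (K - N) * lam ^ card (K \<inter> N)"
      by (simp add: power_add)
  qed
  also have "\<dots> = (\<Sum>p\<in>h ` indep_sets U E. lam ^ card (fst p) * lam ^ card (snd p))"
    by (subst sum.reindex[OF inj]) (simp add: h_def)
  also have "\<dots> \<le> (\<Sum>p\<in>indep_sets (U - N) E \<times> Pow N. lam ^ card (fst p) * lam ^ card (snd p))"
    using img lam U finN by (intro sum_mono2 finite_cartesian_product fin_ind) auto
  also have "\<dots> = (\<Sum>K\<in>indep_sets (U - N) E. \<Sum>T\<in>Pow N. lam ^ card K * lam ^ card T)"
    by (simp add: sum.cartesian_product case_prod_unfold)
  also have "\<dots> = hc_Z (U - N) E lam * (\<Sum>T\<in>Pow N. lam ^ card T)"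
    by (simp add: hc_Z_def sum_product)
  also have "\<dots> = hc_Z (U - N) E lam * (1 + lam) ^ card N"
    using sum_Pow_pow finN by metis
  finally show ?thesis .
qed

lemma contain_u:
  assumes sym: "\<forall>x y. E x y \<longrightarrow> E y x" and irr: "\<forall>x. \<not> E x x" and U: "finite U" and u: "u \<in> U"
  shows "(\<Sum>K\<in>{K\<in>indep_sets U E. u \<in> K}. lam ^ card K)
         = lam * hc_Z (U - insert u {w. E u w}) E lam"
proof -
  define U' where "U' = U - insert u {w. E u w}"
  have eq: "{K\<in>indep_sets U E. u \<in> K} = insert u ` indep_sets U' E"
  proof (intro set_eqI iffI)
    fix K assume K: "K \<in> {K\<in>indep_sets U E. u \<in> K}"
    then have "K - {u} \<in> indep_sets U' E" using sym unfolding U'_def indep_sets_def by blast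
    moreover have "K = insert u (K - {u})" using K by auto
    ultimately show "K \<in> insert u ` indep_sets U' E" by blast
  next
    fix K assume "K \<in> insert u ` indep_sets U' E"
    then obtain K' where K': "K' \<in> indep_sets U' E" "K = insert u K'" by blast
    then show "K \<in> {K\<in>indep_sets U E. u \<in> K}"
      using u sym irr unfolding U'_def indep_sets_def by blast
  qed
  have inj: "inj_on (insert u) (indep_sets U' E)"
    by (rule inj_onI) (auto simp: U'_def indep_sets_def)
  have "(\<Sum>K\<in>{K\<in>indep_sets U E. u \<in> K}. lam ^ card K) = (\<Sum>K'\<in>indep_sets U' E. lam ^ card (insert u K'))"
    unfolding eq by (subst sum.reindex[OF inj]) simp
  also have "\<dots> = (\<Sum>K'\<in>indep_sets U' E. lam * lam ^ card K')"
  proof (rule sum.cong[OF refl])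
    fix K' assume K': "K' \<in> indep_sets U' E"
    then have "finite K'" "u \<notin> K'" using U unfolding U'_def indep_sets_def by (auto intro: finite_subset)
    then show "lam ^ card (insert u K') = lam * lam ^ card K'" by simp
  qed
  also have "\<dots> = lam * hc_Z U' E lam" by (simp add: hc_Z_def sum_distrib_left)
  finally show ?thesis unfolding U'_def .
qed

lemma contain_u_bound:
  assumes sym: "\<forall>x y. E x y \<longrightarrow> E y x" and irr: "\<forall>x. \<not> E x x" and U: "finite U" and u: "u \<in> U"
    and lam: "lam > 0"
  shows "(\<Sum>K\<in>{K\<in>indep_sets U E. u \<in> K}. lam ^ card K)
         \<ge> lam / (1 + lam) * hc_Z U E lam * (1 + lam) powr (- real (card {w\<in>U. E u w}))"
proof -
  define N where "N = insert u {w\<in>U. E u w}"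
  have NU: "N \<subseteq> U" using u by (auto simp: N_def)
  have cN: "card N = card {w\<in>U. E u w} + 1"
    unfolding N_def using U irr by (subst card_insert_disjoint) auto
  have UN: "U - N = U - insert u {w. E u w}" unfolding N_def by auto
  have sp: "hc_Z U E lam \<le> hc_Z (U - N) E lam * (1 + lam) ^ card N"
    using Z_split[OF U NU] lam by simp
  define d where "d = card {w\<in>U. E u w}"
  have pw: "(1 + lam) powr (- real d) = 1 / (1 + lam) ^ d"
    using lam by (simp add: powr_minus powr_realpow divide_inverse)
  have "lam / (1 + lam) * hc_Z U E lam * (1 + lam) powr (- real d)
        = lam * hc_Z U E lam / (1 + lam) ^ (d + 1)"
    using lam by (simp add: pw field_simps)
  also have "\<dots> \<le> lam * (hc_Z (U - N) E lam * (1 + lam) ^ card N) / (1 + lam) ^ (d + 1)"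
    using sp lam by (intro divide_right_mono mult_left_mono) auto
  also have "\<dots> = lam * hc_Z (U - N) E lam"
    using lam cN by (simp add: d_def)
  also have "\<dots> = (\<Sum>K\<in>{K\<in>indep_sets U E. u \<in> K}. lam ^ card K)"
    using contain_u[OF sym irr U u] UN by simp
  finally show ?thesis by (simp add: d_def)
qed

lemma sum_card_split:
  assumes U: "finite U"
  shows "(\<Sum>K\<in>indep_sets U E. (lam::real) ^ card K * real (card K))
       = (\<Sum>u\<in>U. \<Sum>K\<in>{K\<in>indep_sets U E. u \<in> K}. lam ^ card K)"
proof -
  have c: "real (card K) = (\<Sum>u\<in>U. if u \<in> K then 1 else 0)" if "K \<in> indep_sets U E" for K
  proof -
    have "K \<subseteq> U" using that by (auto simp: indep_sets_def)
    then have "U \<inter> {u. u \<in> K} = K" by auto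
    then show ?thesis using U by (simp add: sum.If_cases)
  qed
  have "(\<Sum>K\<in>indep_sets U E. lam ^ card K * real (card K))
      = (\<Sum>K\<in>indep_sets U E. \<Sum>u\<in>U. if u \<in> K then lam ^ card K else 0)"
    by (rule sum.cong[OF refl]) (simp add: c sum_distrib_left if_distrib cong: if_cong)
  also have "\<dots> = (\<Sum>u\<in>U. \<Sum>K\<in>indep_sets U E. if u \<in> K then lam ^ card K else 0)"
    by (rule sum.swap)
  also have "\<dots> = (\<Sum>u\<in>U. \<Sum>K\<in>{K\<in>indep_sets U E. u \<in> K}. lam ^ card K)"
    using fin_ind[OF U] by (simp add: sum.inter_filter)
  finally show ?thesis .
qed

lemma handshake:
  assumes U: "finite U"
  shows "(\<Sum>u\<in>U. card {w\<in>U. E u w}) \<le> 2 * induced_edges E U"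
proof -
  define D where "D = (SIGMA u:U. {w\<in>U. E u w})"
  define Ed where "Ed = {{x, y} | x y. x \<in> U \<and> y \<in> U \<and> E x y}"
  have finEd: "finite Ed" unfolding Ed_def
    by (rule finite_subset[of _ "Pow U"]) (use U in auto)
  have cD: "card D = (\<Sum>u\<in>U. card {w\<in>U. E u w})"
    unfolding D_def using U by simp
  have finD: "finite D" unfolding D_def using U by auto
  have sub: "D \<subseteq> (\<Union>e\<in>Ed. {p\<in>D. {fst p, snd p} = e})"
  proof
    fix p assume p: "p \<in> D"
    obtain a b where ab: "p = (a, b)" by (cases p)
    then have "a \<in> U" "b \<in> U" "E a b" using p unfolding D_def by auto
    then have "{fst p, snd p} \<in> Ed" unfolding Ed_def ab by auto
    then show "p \<in> (\<Union>e\<in>Ed. {p\<in>D. {fst p, snd p} = e})" using p by blast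
  qed
  have fib: "card {p\<in>D. {fst p, snd p} = e} \<le> 2" if eE: "e \<in> Ed" for e
  proof -
    obtain x y where e: "e = {x, y}" using eE unfolding Ed_def by blast
    have "{p\<in>D. {fst p, snd p} = e} \<subseteq> {(x, y), (y, x)}"
      unfolding e by (auto simp: doubleton_eq_iff)
    then have "card {p\<in>D. {fst p, snd p} = e} \<le> card {(x, y), (y, x)}"
      by (intro card_mono) auto
    also have "\<dots> \<le> 2" by (cases "x = y") auto
    finally show ?thesis .
  qed
  have "card D \<le> card (\<Union>e\<in>Ed. {p\<in>D. {fst p, snd p} = e})"
    using sub finD finEd by (intro card_mono) auto
  also have "\<dots> \<le> (\<Sum>e\<in>Ed. card {p\<in>D. {fst p, snd p} = e})"
    by (rule card_UN_le[OF finEd])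
  also have "\<dots> \<le> (\<Sum>e\<in>Ed. 2)" by (rule sum_mono) (rule fib)
  also have "\<dots> = 2 * induced_edges E U" by (simp add: Ed_def induced_edges_def)
  finally show ?thesis using cD by simp
qed

lemma local_bound:
  assumes sym: "\<forall>x y. E x y \<longrightarrow> E y x" and irr: "\<forall>x. \<not> E x x" and U: "finite U"
    and lam: "lam > 0" and D: "real (induced_edges E U) \<le> D"
  shows "(\<Sum>K\<in>indep_sets U E. lam ^ card K * real (card K))
         \<ge> lam / (1 + lam) * hc_Z U E lam * (real (card U) * (1 + lam) powr (- (2 * D / real (card U))))"
proof (cases "U = {}")
  case True
  then show ?thesis using lam by (simp add: hc_Z_def indep_sets_def)
next
  case False
  define d where "d = (\<lambda>u. real (card {w\<in>U. E u w}))"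
  define y where "y = real (card U)"
  have ypos: "y > 0" using False U by (simp add: y_def card_gt_0_iff)
  have Zp: "hc_Z U E lam \<ge> 0" using Z_ge1[OF U] lam by (meson less_imp_le order_trans zero_le_one)
  have j1: "y * (1 + lam) powr (- ((\<Sum>u\<in>U. d u) / y)) \<le> (\<Sum>u\<in>U. (1 + lam) powr (- d u))"
    using jensen_w[OF convex_A[of "1 + lam"] U, of "\<lambda>_. 1" d] lam ypos
    by (simp add: y_def d_def)
  have j2: "(1 + lam) powr (- (2 * D / y)) \<le> (1 + lam) powr (- ((\<Sum>u\<in>U. d u) / y))"
  proof -
    have "real (\<Sum>u\<in>U. card {w\<in>U. E u w}) \<le> real (2 * induced_edges E U)"
      using handshake[OF U, of E] by (simp only: of_nat_le_iff)
    then have "(\<Sum>u\<in>U. d u) \<le> 2 * real (induced_edges E U)" by (simp add: d_def)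
    then have "(\<Sum>u\<in>U. d u) \<le> 2 * D" using D by linarith
    then have "(\<Sum>u\<in>U. d u) / y \<le> 2 * D / y" using ypos by (simp add: divide_right_mono)
    then show ?thesis using lam by (intro powr_mono) auto
  qed
  have J: "y * (1 + lam) powr (- (2 * D / y)) \<le> (\<Sum>u\<in>U. (1 + lam) powr (- d u))"
    using mult_left_mono[OF j2, of y] ypos j1 by linarith
  have "lam / (1 + lam) * hc_Z U E lam * (y * (1 + lam) powr (- (2 * D / y)))
        \<le> lam / (1 + lam) * hc_Z U E lam * (\<Sum>u\<in>U. (1 + lam) powr (- d u))"
    using J Zp lam by (intro mult_left_mono) auto
  also have "\<dots> = (\<Sum>u\<in>U. lam / (1 + lam) * hc_Z U E lam * (1 + lam) powr (- d u))"
    by (simp add: sum_distrib_left)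
  also have "\<dots> \<le> (\<Sum>u\<in>U. \<Sum>K\<in>{K\<in>indep_sets U E. u \<in> K}. lam ^ card K)"
    using contain_u_bound[OF sym irr U _ lam] unfolding d_def by (intro sum_mono) auto
  also have "\<dots> = (\<Sum>K\<in>indep_sets U E. lam ^ card K * real (card K))"
    using sum_card_split[OF U] by simp
  finally show ?thesis by (simp add: y_def)
qed



definition Rset :: "'a set \<Rightarrow> ('a \<Rightarrow> 'a \<Rightarrow> bool) \<Rightarrow> 'a \<Rightarrow> 'a set" where
  "Rset V E v = V - insert v (nbhd V E v)"

definition Uset :: "'a set \<Rightarrow> ('a \<Rightarrow> 'a \<Rightarrow> bool) \<Rightarrow> 'a \<Rightarrow> 'a set \<Rightarrow> 'a set" where
  "Uset V E v J = {u \<in> nbhd V E v. \<forall>w\<in>J. \<not> E u w}"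

lemma decomp_set:
  assumes G: "fin_graph V E" and v: "v \<in> V"
  shows "indep_sets V E = (\<Union>J\<in>indep_sets (Rset V E v) E. (\<lambda>K. J \<union> K) ` insert {v} (indep_sets (Uset V E v J) E))"
proof (intro set_eqI iffI)
  have sym: "\<forall>x y. E x y \<longrightarrow> E y x" and irr: "\<forall>x. \<not> E x x" and inV: "\<forall>x y. E x y \<longrightarrow> x \<in> V \<and> y \<in> V"
    using G by (auto simp: fin_graph_def)
  fix I assume I: "I \<in> indep_sets V E"
  define J where "J = I \<inter> Rset V E v"
  have J: "J \<in> indep_sets (Rset V E v) E" using I by (auto simp: J_def indep_sets_def)
  show "I \<in> (\<Union>J\<in>indep_sets (Rset V E v) E. (\<lambda>K. J \<union> K) ` insert {v} (indep_sets (Uset V E v J) E))"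
  proof (cases "v \<in> I")
    case True
    have "I \<inter> nbhd V E v = {}" using I True by (auto simp: indep_sets_def nbhd_def)
    then have "I = J \<union> {v}" using I True by (auto simp: J_def Rset_def indep_sets_def)
    then show ?thesis using J by blast
  next
    case False
    define K where "K = I \<inter> nbhd V E v"
    have "I = J \<union> K" using I False by (auto simp: J_def K_def Rset_def indep_sets_def)
    moreover have "K \<in> indep_sets (Uset V E v J) E"
      using I by (auto simp: K_def J_def Uset_def indep_sets_def)
    ultimately show ?thesis using J by blast
  qed
next
  have sym: "\<forall>x y. E x y \<longrightarrow> E y x" and irr: "\<forall>x. \<not> E x x"
    using G by (auto simp: fin_graph_def)
  fix I assume "I \<in> (\<Union>J\<in>indep_sets (Rset V E v) E. (\<lambda>K. J \<union> K) ` insert {v} (indep_sets (Uset V E v J) E))"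
  then obtain J K where J: "J \<in> indep_sets (Rset V E v) E" and K: "K \<in> insert {v} (indep_sets (Uset V E v J) E)"
    and IJK: "I = J \<union> K" by blast
  show "I \<in> indep_sets V E"
  proof (cases "K = {v}")
    case True
    have "\<forall>w\<in>J. \<not> E v w \<and> \<not> E w v" using J sym by (auto simp: indep_sets_def Rset_def nbhd_def)
    then show ?thesis using J v irr True IJK by (auto simp: indep_sets_def Rset_def)
  next
    case False
    then have K: "K \<in> indep_sets (Uset V E v J) E" using K by auto
    have "\<forall>u\<in>K. \<forall>w\<in>J. \<not> E u w \<and> \<not> E w u" using K sym by (auto simp: indep_sets_def Uset_def)
    then show ?thesis using J K IJK by (auto simp: indep_sets_def Rset_def Uset_def nbhd_def)
  qed
qed

lemma decomp_sum:
  assumes G: "fin_graph V E" and v: "v \<in> V"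
  shows "(\<Sum>I\<in>indep_sets V E. F I)
       = (\<Sum>J\<in>indep_sets (Rset V E v) E. (\<Sum>K\<in>indep_sets (Uset V E v J) E. F (J \<union> K)) + F (insert v J))"
proof -
  have irr: "\<forall>x. \<not> E x x" and finV: "finite V" using G by (auto simp: fin_graph_def)
  define R where "R = Rset V E v"
  define A where "A = (\<lambda>J. (\<lambda>K. J \<union> K) ` insert {v} (indep_sets (Uset V E v J) E))"
  have finR: "finite R" using finV by (simp add: R_def Rset_def)
  have finU: "finite (Uset V E v J)" for J using finV by (simp add: Uset_def nbhd_def)
  have subK: "K \<subseteq> insert v (nbhd V E v)" if "K \<in> insert {v} (indep_sets (Uset V E v J) E)" for K J
    using that by (auto simp: indep_sets_def Uset_def)
  have disjRS: "R \<inter> insert v (nbhd V E v) = {}" by (auto simp: R_def Rset_def)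
  have JR: "J \<subseteq> R" if "J \<in> indep_sets R E" for J using that by (auto simp: indep_sets_def)
  have cap: "(J \<union> K) \<inter> R = J" if "J \<in> indep_sets R E" "K \<in> insert {v} (indep_sets (Uset V E v J) E)" for J K
    using subK[OF that(2)] JR[OF that(1)] disjRS by blast
  have "(\<Sum>I\<in>indep_sets V E. F I) = sum F (\<Union>J\<in>indep_sets R E. A J)"
    using decomp_set[OF G v] by (simp add: A_def R_def)
  also have "\<dots> = (\<Sum>J\<in>indep_sets R E. sum F (A J))"
  proof (rule sum.UNION_disjoint)
    show "finite (indep_sets R E)" using fin_ind[OF finR] .
    show "\<forall>J\<in>indep_sets R E. finite (A J)" using fin_ind[OF finU] by (simp add: A_def)
    show "\<forall>J1\<in>indep_sets R E. \<forall>J2\<in>indep_sets R E. J1 \<noteq> J2 \<longrightarrow> A J1 \<inter> A J2 = {}"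
    proof (intro ballI impI)
      fix J1 J2 assume J1: "J1 \<in> indep_sets R E" and J2: "J2 \<in> indep_sets R E" and ne: "J1 \<noteq> J2"
      show "A J1 \<inter> A J2 = {}"
      proof (rule ccontr)
        assume "A J1 \<inter> A J2 \<noteq> {}"
        then obtain K1 K2 where K1: "K1 \<in> insert {v} (indep_sets (Uset V E v J1) E)"
          and K2: "K2 \<in> insert {v} (indep_sets (Uset V E v J2) E)" and eq: "J1 \<union> K1 = J2 \<union> K2"
          unfolding A_def by blast
        have "J1 = J2" using cap[OF J1 K1] cap[OF J2 K2] eq by simp
        then show False using ne by simp
      qed
    qed
  qed
  also have "\<dots> = (\<Sum>J\<in>indep_sets R E. (\<Sum>K\<in>indep_sets (Uset V E v J) E. F (J \<union> K)) + F (insert v J))"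
  proof (rule sum.cong[OF refl])
    fix J assume J: "J \<in> indep_sets R E"
    have inj: "inj_on (\<lambda>K. J \<union> K) (insert {v} (indep_sets (Uset V E v J) E))"
    proof (rule inj_onI)
      fix K1 K2 assume K1: "K1 \<in> insert {v} (indep_sets (Uset V E v J) E)"
        and K2: "K2 \<in> insert {v} (indep_sets (Uset V E v J) E)" and eq: "J \<union> K1 = J \<union> K2"
      have "K1 \<inter> R = {}" "K2 \<inter> R = {}" using subK[OF K1] subK[OF K2] disjRS by auto
      then show "K1 = K2" using eq JR[OF J] by blast
    qed
    have vn: "{v} \<notin> indep_sets (Uset V E v J) E"
      using irr by (auto simp: indep_sets_def Uset_def nbhd_def)
    have "sum F (A J) = (\<Sum>K\<in>insert {v} (indep_sets (Uset V E v J) E). F (J \<union> K))"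
      unfolding A_def by (subst sum.reindex[OF inj]) simp
    also have "\<dots> = F (J \<union> {v}) + (\<Sum>K\<in>indep_sets (Uset V E v J) E. F (J \<union> K))"
      using vn fin_ind[OF finU] by (simp add: sum.insert)
    finally show "sum F (A J) = (\<Sum>K\<in>indep_sets (Uset V E v J) E. F (J \<union> K)) + F (insert v J)"
      by (simp add: add.commute)
  qed
  finally show ?thesis by (simp add: R_def)
qed

lemma decomp_facts:
  assumes G: "fin_graph V E" and v: "v \<in> V"
    and J: "J \<in> indep_sets (Rset V E v) E" and K: "K \<in> indep_sets (Uset V E v J) E"
  shows "card (J \<union> K) = card J + card K" "v \<notin> J \<union> K" "nbhd V E v \<inter> (J \<union> K) = K"
    "card (insert v J) = Suc (card J)" "nbhd V E v \<inter> insert v J = {}" "v \<in> insert v J"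
proof -
  have irr: "\<forall>x. \<not> E x x" and finV: "finite V" using G by (auto simp: fin_graph_def)
  have JR: "J \<subseteq> V - insert v (nbhd V E v)" using J by (auto simp: indep_sets_def Rset_def)
  have KS: "K \<subseteq> nbhd V E v" using K by (auto simp: indep_sets_def Uset_def)
  have vS: "v \<notin> nbhd V E v" using irr by (simp add: nbhd_def)
  have fJ: "finite J" using JR finV finite_subset by blast
  have "nbhd V E v \<subseteq> V" by (auto simp: nbhd_def)
  then have fK: "finite K" using KS finV finite_subset by blast
  show "card (J \<union> K) = card J + card K" using fJ fK JR KS by (intro card_Un_disjoint) auto
  show "v \<notin> J \<union> K" using JR KS vS by auto
  show "nbhd V E v \<inter> (J \<union> K) = K" using JR KS by auto
  have "v \<notin> J" using JR by auto
  then show "card (insert v J) = Suc (card J)" using fJ by simp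
  show "nbhd V E v \<inter> insert v J = {}" using JR vS by auto
  show "v \<in> insert v J" by simp
qed



lemma edges_mono:
  assumes T: "finite T" and UT: "U \<subseteq> T"
  shows "induced_edges E U \<le> induced_edges E T"
  unfolding induced_edges_def
proof (rule card_mono)
  show "finite {{x, y} |x y. x \<in> T \<and> y \<in> T \<and> E x y}"
    by (rule finite_subset[of _ "Pow T"]) (use T in auto)
  show "{{x, y} |x y. x \<in> U \<and> y \<in> U \<and> E x y} \<subseteq> {{x, y} |x y. x \<in> T \<and> y \<in> T \<and> E x y}"
    using UT by blast
qed

locale hcsetup =
  fixes V :: "'a set" and E :: "'a \<Rightarrow> 'a \<Rightarrow> bool" and f lam :: real and \<Delta> :: nat
  assumes G: "fin_graph V E" and nonempty: "V \<noteq> {}"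
    and fpos: "f > 0" and lpos: "lam > 0"
    and Delta: "\<Delta> = max_degree V E" "\<Delta> \<ge> 1"
    and sparse: "\<forall>v\<in>V. real (induced_edges E (nbhd V E v)) \<le> real \<Delta> ^ 2 / f"
begin

definition "q = 1 + lam"
definition "cc = lam / (1 + lam)"
definition "C = 2 * real \<Delta> ^ 2 / f"
definition "Af z = q powr (- z)"
definition "Bf z = z * q powr (- (C / z))"
definition "ZZ = hc_Z V E lam"
definition "Js v = indep_sets (Rset V E v) E"
definition "UJ v J = Uset V E v J"
definition "ZJ v J = hc_Z (UJ v J) E lam"
definition "yJ v J = real (card (UJ v J))"
definition "MJ v J = (\<Sum>K\<in>indep_sets (UJ v J) E. lam ^ card K * real (card K))"

lemma sym: "\<forall>x y. E x y \<longrightarrow> E y x" and irr: "\<forall>x. \<not> E x x" and finV: "finite V"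
  and inV: "\<forall>x y. E x y \<longrightarrow> x \<in> V \<and> y \<in> V"
  using G by (auto simp: fin_graph_def)

lemma q1: "q > 1" using lpos by (simp add: q_def)
lemma cc_pos: "cc > 0" using lpos by (simp add: cc_def)
lemma C_nonneg: "C \<ge> 0" using fpos by (simp add: C_def)
lemma ZZ_pos: "ZZ \<ge> 1" using Z_ge1[OF finV] lpos by (simp add: ZZ_def)
lemma finUJ: "finite (UJ v J)" using finV by (simp add: UJ_def Uset_def nbhd_def)
lemma ZJ_ge1: "ZJ v J \<ge> 1" using Z_ge1[OF finUJ] lpos by (simp add: ZJ_def)
lemma finJs: "finite (Js v)" unfolding Js_def Rset_def using finV by (intro fin_ind) auto

lemma ZA_le1: "ZJ v J * Af (yJ v J) \<le> 1"
proof -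
  have "ZJ v J \<le> q ^ card (UJ v J)" using Z_le_pow[OF finUJ] lpos by (simp add: ZJ_def q_def)
  moreover have "Af (yJ v J) = 1 / q ^ card (UJ v J)"
    using q1 by (simp add: Af_def yJ_def powr_minus powr_realpow divide_inverse)
  ultimately show ?thesis using q1 by (simp add: divide_le_eq_1)
qed

lemma lam_bound: "lam \<ge> cc * (ZJ v J * Af (yJ v J) + lam)"
proof -
  have "cc * (ZJ v J * Af (yJ v J) + lam) \<le> cc * (1 + lam)"
    using ZA_le1 cc_pos by (intro mult_left_mono) auto
  also have "\<dots> = lam" using lpos by (simp add: cc_def)
  finally show ?thesis .
qed

lemma M_bound: assumes v: "v \<in> V" shows "MJ v J \<ge> cc * ZJ v J * Bf (yJ v J)"
proof -
  have "UJ v J \<subseteq> nbhd V E v" by (auto simp: UJ_def Uset_def)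
  then have "induced_edges E (UJ v J) \<le> induced_edges E (nbhd V E v)"
    using finV by (intro edges_mono) (auto simp: nbhd_def)
  then have D: "real (induced_edges E (UJ v J)) \<le> real \<Delta> ^ 2 / f"
    using sparse v by (meson of_nat_le_iff order_trans)
  have "2 * (real \<Delta> ^ 2 / f) = C" by (simp add: C_def)
  then show ?thesis
    using local_bound[OF sym irr finUJ lpos D]
    by (simp add: MJ_def cc_def ZJ_def Bf_def yJ_def q_def)
qed

lemma decomp_Z: assumes v: "v \<in> V" shows "ZZ = (\<Sum>J\<in>Js v. lam ^ card J * (ZJ v J + lam))"
proof -
  have "ZZ = (\<Sum>J\<in>Js v. (\<Sum>K\<in>indep_sets (UJ v J) E. lam ^ card (J \<union> K)) + lam ^ card (insert v J))"
    unfolding ZZ_def hc_Z_def Js_def UJ_def by (rule decomp_sum[OF G v])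
  also have "\<dots> = (\<Sum>J\<in>Js v. lam ^ card J * (ZJ v J + lam))"
  proof (rule sum.cong[OF refl])
    fix J assume J: "J \<in> Js v"
    have "(\<Sum>K\<in>indep_sets (UJ v J) E. lam ^ card (J \<union> K)) = (\<Sum>K\<in>indep_sets (UJ v J) E. lam ^ card J * lam ^ card K)"
      using decomp_facts(1)[OF G v J[unfolded Js_def]] by (simp add: UJ_def power_add)
    moreover have "lam ^ card (insert v J) = lam ^ card J * lam"
      using decomp_facts(4)[OF G v J[unfolded Js_def] empty_ind] by simp
    ultimately show "(\<Sum>K\<in>indep_sets (UJ v J) E. lam ^ card (J \<union> K)) + lam ^ card (insert v J) = lam ^ card J * (ZJ v J + lam)"
      by (simp add: ZJ_def hc_Z_def sum_distrib_left distrib_left)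
  qed
  finally show ?thesis .
qed

lemma decomp_P: assumes v: "v \<in> V"
  shows "(\<Sum>I\<in>indep_sets V E. lam ^ card I * (if v \<in> I then 1 else 0)) = (\<Sum>J\<in>Js v. lam ^ card J * lam)"
proof -
  have "(\<Sum>I\<in>indep_sets V E. lam ^ card I * (if v \<in> I then 1 else 0))
     = (\<Sum>J\<in>Js v. (\<Sum>K\<in>indep_sets (UJ v J) E. lam ^ card (J \<union> K) * (if v \<in> J \<union> K then 1 else 0))
            + lam ^ card (insert v J) * (if v \<in> insert v J then 1 else 0))"
    unfolding Js_def UJ_def by (rule decomp_sum[OF G v])
  also have "\<dots> = (\<Sum>J\<in>Js v. lam ^ card J * lam)"
  proof (rule sum.cong[OF refl])
    fix J assume J: "J \<in> Js v"
    have "(\<Sum>K\<in>indep_sets (UJ v J) E. lam ^ card (J \<union> K) * (if v \<in> J \<union> K then 1 else 0)) = 0"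
      using decomp_facts(2)[OF G v J[unfolded Js_def]] by (simp add: UJ_def)
    moreover have "lam ^ card (insert v J) = lam ^ card J * lam"
      using decomp_facts(4)[OF G v J[unfolded Js_def] empty_ind] by simp
    ultimately show "(\<Sum>K\<in>indep_sets (UJ v J) E. lam ^ card (J \<union> K) * (if v \<in> J \<union> K then 1 else 0))
            + lam ^ card (insert v J) * (if v \<in> insert v J then 1 else 0) = lam ^ card J * lam"
      by simp
  qed
  finally show ?thesis .
qed

lemma decomp_N: assumes v: "v \<in> V"
  shows "(\<Sum>I\<in>indep_sets V E. lam ^ card I * real (card (nbhd V E v \<inter> I))) = (\<Sum>J\<in>Js v. lam ^ card J * MJ v J)"
proof -
  have "(\<Sum>I\<in>indep_sets V E. lam ^ card I * real (card (nbhd V E v \<inter> I)))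
     = (\<Sum>J\<in>Js v. (\<Sum>K\<in>indep_sets (UJ v J) E. lam ^ card (J \<union> K) * real (card (nbhd V E v \<inter> (J \<union> K))))
            + lam ^ card (insert v J) * real (card (nbhd V E v \<inter> insert v J)))"
    unfolding Js_def UJ_def by (rule decomp_sum[OF G v])
  also have "\<dots> = (\<Sum>J\<in>Js v. lam ^ card J * MJ v J)"
  proof (rule sum.cong[OF refl])
    fix J assume J: "J \<in> Js v"
    have "(\<Sum>K\<in>indep_sets (UJ v J) E. lam ^ card (J \<union> K) * real (card (nbhd V E v \<inter> (J \<union> K))))
        = (\<Sum>K\<in>indep_sets (UJ v J) E. lam ^ card J * (lam ^ card K * real (card K)))"
      using decomp_facts(1,3)[OF G v J[unfolded Js_def]] by (simp add: UJ_def power_add mult.assoc)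
    moreover have "nbhd V E v \<inter> insert v J = {}"
      using decomp_facts(5)[OF G v J[unfolded Js_def] empty_ind] by simp
    ultimately show "(\<Sum>K\<in>indep_sets (UJ v J) E. lam ^ card (J \<union> K) * real (card (nbhd V E v \<inter> (J \<union> K))))
            + lam ^ card (insert v J) * real (card (nbhd V E v \<inter> insert v J)) = lam ^ card J * MJ v J"
      by (simp add: MJ_def sum_distrib_left)
  qed
  finally show ?thesis .
qed


lemma Af0: "Af 0 = 1" using q1 by (simp add: Af_def)
lemma Bf0: "Bf 0 = 0" by (simp add: Bf_def)
lemma Af_pos: "Af z > 0" using q1 by (simp add: Af_def)
lemma Bf_nonneg: "z \<ge> 0 \<Longrightarrow> Bf z \<ge> 0" using q1 by (simp add: Bf_def)
lemma yJ_nonneg: "yJ v J \<ge> 0" by (simp add: yJ_def)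

lemma part1:
  fixes \<alpha> \<beta> :: real
  assumes a: "\<alpha> > 0" and b: "\<beta> > 0" and v: "v \<in> V"
  shows "\<alpha> * hc_prob V E lam (\<lambda>I. v \<in> I)
            + \<beta> * hc_expect V E lam (\<lambda>I. real (card (nbhd V E v \<inter> I)))
          \<ge> lam / (1 + lam) *
            (INF z\<in>{0::real..}. \<alpha> * (1 + lam) powr (- z)
               + \<beta> * z * (1 + lam) powr (- (2 * real \<Delta> ^ 2 / (f * z))))"
proof -
  define g where "g z = \<alpha> * Af z + \<beta> * Bf z" for z
  have geq: "\<alpha> * (1 + lam) powr (- z) + \<beta> * z * (1 + lam) powr (- (2 * real \<Delta> ^ 2 / (f * z))) = g z" for z
    by (simp add: g_def Af_def Bf_def q_def C_def mult.assoc)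
  define m where "m = (INF z\<in>{0::real..}. g z)"
  have bdd: "bdd_below (g ` {0..})"
  proof (rule bdd_belowI[of _ 0])
    fix x assume "x \<in> g ` {0..}"
    then obtain z where z: "z \<ge> 0" "x = g z" by auto
    have "0 \<le> \<alpha> * Af z" using a Af_pos[of z] by simp
    moreover have "0 \<le> \<beta> * Bf z" using b Bf_nonneg[OF z(1)] by simp
    ultimately show "0 \<le> x" using z by (simp add: g_def)
  qed
  have mle: "m \<le> g z" if "z \<ge> 0" for z
    unfolding m_def using that by (intro cINF_lower[OF bdd]) auto
  have g0: "g 0 = \<alpha>" by (simp add: g_def Af0 Bf0)
  have perJ: "\<alpha> * lam + \<beta> * MJ v J \<ge> cc * (ZJ v J + lam) * m" for J
  proof -
    have "\<alpha> * lam \<ge> \<alpha> * (cc * (ZJ v J * Af (yJ v J) + lam))"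
      using lam_bound a by (intro mult_left_mono) auto
    moreover have "\<beta> * MJ v J \<ge> \<beta> * (cc * ZJ v J * Bf (yJ v J))"
      using M_bound[OF v] b by (intro mult_left_mono) auto
    moreover have "cc * ZJ v J * m \<le> cc * ZJ v J * g (yJ v J)"
      using mle[OF yJ_nonneg] cc_pos ZJ_ge1[of v J] by (intro mult_left_mono) auto
    moreover have "cc * lam * m \<le> cc * lam * \<alpha>"
      using mle[of 0] g0 cc_pos lpos by (intro mult_left_mono) auto
    ultimately show ?thesis by (simp add: g_def algebra_simps)
  qed
  have "cc * m * ZZ = (\<Sum>J\<in>Js v. lam ^ card J * (cc * (ZJ v J + lam) * m))"
    by (simp add: decomp_Z[OF v] sum_distrib_left algebra_simps)
  also have "\<dots> \<le> (\<Sum>J\<in>Js v. lam ^ card J * (\<alpha> * lam + \<beta> * MJ v J))"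
    using perJ lpos by (intro sum_mono mult_left_mono) auto
  also have "\<dots> = \<alpha> * (\<Sum>J\<in>Js v. lam ^ card J * lam) + \<beta> * (\<Sum>J\<in>Js v. lam ^ card J * MJ v J)"
    by (simp add: sum_distrib_left sum.distrib algebra_simps)
  also have "\<dots> = \<alpha> * (\<Sum>I\<in>indep_sets V E. lam ^ card I * (if v \<in> I then 1 else 0))
      + \<beta> * (\<Sum>I\<in>indep_sets V E. lam ^ card I * real (card (nbhd V E v \<inter> I)))"
    by (simp add: decomp_P[OF v] decomp_N[OF v])
  finally have "cc * m * ZZ \<le> \<dots>" .
  then have "cc * m \<le> (\<alpha> * (\<Sum>I\<in>indep_sets V E. lam ^ card I * (if v \<in> I then 1 else 0))
      + \<beta> * (\<Sum>I\<in>indep_sets V E. lam ^ card I * real (card (nbhd V E v \<inter> I)))) / ZZ"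
    using ZZ_pos by (simp add: pos_le_divide_eq)
  also have "\<dots> = \<alpha> * hc_prob V E lam (\<lambda>I. v \<in> I) + \<beta> * hc_expect V E lam (\<lambda>I. real (card (nbhd V E v \<inter> I)))"
    by (simp add: hc_prob_def hc_expect_def ZZ_def add_divide_distrib)
  finally show ?thesis by (simp add: geq m_def cc_def)
qed


lemma deg_le: assumes u: "u \<in> V" shows "card (nbhd V E u) \<le> \<Delta>"
  unfolding Delta(1) max_degree_def using finV u by (intro Max_ge) auto

lemma nbhd_sum_le: assumes I: "I \<in> indep_sets V E"
  shows "(\<Sum>v\<in>V. real (card (nbhd V E v \<inter> I))) \<le> real \<Delta> * real (card I)"
proof -
  have IV: "I \<subseteq> V" using I by (auto simp: indep_sets_def)
  have fI: "finite I" using IV finV finite_subset by auto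
  have c1: "real (card (nbhd V E v \<inter> I)) = (\<Sum>u\<in>I. if E v u then 1 else 0)" for v
  proof -
    have "nbhd V E v \<inter> I = I \<inter> {u. E v u}" using IV by (auto simp: nbhd_def)
    then show ?thesis using fI by (simp add: sum.If_cases)
  qed
  have c2: "(\<Sum>v\<in>V. (if E v u then 1 else 0)) = real (card (nbhd V E u))" for u
  proof -
    have "V \<inter> {v. E v u} = nbhd V E u" using sym by (auto simp: nbhd_def)
    then show ?thesis using finV by (simp add: sum.If_cases)
  qed
  have "(\<Sum>v\<in>V. real (card (nbhd V E v \<inter> I))) = (\<Sum>v\<in>V. \<Sum>u\<in>I. if E v u then 1 else 0)"
    by (simp add: c1)
  also have "\<dots> = (\<Sum>u\<in>I. \<Sum>v\<in>V. if E v u then 1 else 0)" by (rule sum.swap)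
  also have "\<dots> = (\<Sum>u\<in>I. real (card (nbhd V E u)))" by (simp add: c2)
  also have "\<dots> \<le> (\<Sum>u\<in>I. real \<Delta>)" using deg_le IV by (intro sum_mono) auto
  also have "\<dots> = real \<Delta> * real (card I)" by simp
  finally show ?thesis .
qed

definition "TT = (\<Sum>I\<in>indep_sets V E. lam ^ card I * real (card I))"

lemma TT_eq: "TT = (\<Sum>v\<in>V. \<Sum>I\<in>indep_sets V E. lam ^ card I * (if v \<in> I then 1 else 0))"
proof -
  have "TT = (\<Sum>u\<in>V. \<Sum>K\<in>{K\<in>indep_sets V E. u \<in> K}. lam ^ card K)"
    unfolding TT_def by (rule sum_card_split[OF finV])
  also have "\<dots> = (\<Sum>v\<in>V. \<Sum>I\<in>indep_sets V E. lam ^ card I * (if v \<in> I then 1 else 0))"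
  proof -
    have md: "(a::real) * (if P then 1 else 0) = (if P then a else 0)" for a P by simp
    show ?thesis using fin_ind[OF finV] by (simp add: sum.inter_filter md)
  qed
  finally show ?thesis .
qed

lemma TT_N: "(\<Sum>v\<in>V. \<Sum>I\<in>indep_sets V E. lam ^ card I * real (card (nbhd V E v \<inter> I))) \<le> real \<Delta> * TT"
proof -
  have "(\<Sum>v\<in>V. \<Sum>I\<in>indep_sets V E. lam ^ card I * real (card (nbhd V E v \<inter> I)))
      = (\<Sum>I\<in>indep_sets V E. lam ^ card I * (\<Sum>v\<in>V. real (card (nbhd V E v \<inter> I))))"
    by (subst sum.swap) (simp add: sum_distrib_left)
  also have "\<dots> \<le> (\<Sum>I\<in>indep_sets V E. lam ^ card I * (real \<Delta> * real (card I)))"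
    using nbhd_sum_le lpos by (intro sum_mono mult_left_mono) auto
  also have "\<dots> = real \<Delta> * TT" by (simp add: TT_def sum_distrib_left algebra_simps)
  finally show ?thesis .
qed

definition "Sg = (SIGMA v:V. Js v)"
definition "pp x = lam ^ card (snd x) * ZJ (fst x) (snd x)"
definition "qq x = lam ^ card (snd x) * lam"
definition "yy x = yJ (fst x) (snd x)"

lemma finSg: "finite Sg" unfolding Sg_def using finV finJs by auto

lemma Sg_sum: "(\<Sum>x\<in>Sg. F x) = (\<Sum>v\<in>V. \<Sum>J\<in>Js v. F (v, J))"
  unfolding Sg_def using finV finJs by (simp add: sum.Sigma case_prod_unfold)

lemma W_eq: "(\<Sum>x\<in>Sg. pp x + qq x) = real (card V) * ZZ"
proof -
  have "(\<Sum>x\<in>Sg. pp x + qq x) = (\<Sum>v\<in>V. \<Sum>J\<in>Js v. lam ^ card J * (ZJ v J + lam))"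
    by (simp add: Sg_sum pp_def qq_def distrib_left)
  also have "\<dots> = (\<Sum>v\<in>V. ZZ)" using decomp_Z by simp
  finally show ?thesis by simp
qed

lemma TT_lower: "TT \<ge> cc * (\<Sum>x\<in>Sg. pp x * Af (yy x) + qq x * Af 0)"
proof -
  have "cc * (\<Sum>x\<in>Sg. pp x * Af (yy x) + qq x * Af 0)
      = (\<Sum>v\<in>V. \<Sum>J\<in>Js v. lam ^ card J * (cc * (ZJ v J * Af (yJ v J) + lam)))"
    by (simp add: Sg_sum pp_def qq_def yy_def Af0 sum_distrib_left algebra_simps)
  also have "\<dots> \<le> (\<Sum>v\<in>V. \<Sum>J\<in>Js v. lam ^ card J * lam)"
    using lam_bound lpos by (intro sum_mono mult_left_mono) auto
  also have "\<dots> = TT" using decomp_P by (simp add: TT_eq)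
  finally show ?thesis .
qed

lemma TT_lowerB: "real \<Delta> * TT \<ge> cc * (\<Sum>x\<in>Sg. pp x * Bf (yy x) + qq x * Bf 0)"
proof -
  have "cc * (\<Sum>x\<in>Sg. pp x * Bf (yy x) + qq x * Bf 0)
      = (\<Sum>v\<in>V. \<Sum>J\<in>Js v. lam ^ card J * (cc * ZJ v J * Bf (yJ v J)))"
    by (simp add: Sg_sum pp_def qq_def yy_def Bf0 sum_distrib_left algebra_simps)
  also have "\<dots> \<le> (\<Sum>v\<in>V. \<Sum>J\<in>Js v. lam ^ card J * MJ v J)"
    using M_bound lpos by (intro sum_mono mult_left_mono) auto
  also have "\<dots> = (\<Sum>v\<in>V. \<Sum>I\<in>indep_sets V E. lam ^ card I * real (card (nbhd V E v \<inter> I)))"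
    using decomp_N by simp
  also have "\<dots> \<le> real \<Delta> * TT" by (rule TT_N)
  finally show ?thesis .
qed

lemma part2:
  shows "hc_expect V E lam (\<lambda>I. real (card I)) / real (card V)
          \<ge> (INF z\<in>{0::real<..}. max (lam / (1 + lam) * (1 + lam) powr (- z))
               (lam / (1 + lam) * (z / real \<Delta>) * (1 + lam) powr (- (2 * real \<Delta> ^ 2 / (f * z)))))"
proof -
  define W where "W = real (card V) * ZZ"
  have nV: "real (card V) > 0" using finV nonempty by (simp add: card_gt_0_iff)
  have Wpos: "W > 0" using nV ZZ_pos by (simp add: W_def)
  have ppn: "pp x \<ge> 0" "qq x \<ge> 0" "yy x \<ge> 0" for x
    using lpos ZJ_ge1[of "fst x" "snd x"] by (auto simp: pp_def qq_def yy_def yJ_def)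
  define ybar where "ybar = (\<Sum>x\<in>Sg. pp x * yy x) / W"
  have ybar0: "ybar \<ge> 0" using Wpos ppn by (simp add: ybar_def sum_nonneg)
  have WS: "(\<Sum>x\<in>Sg. pp x + qq x) = W" by (simp add: W_eq W_def)
  have JA: "W * Af ybar \<le> (\<Sum>x\<in>Sg. pp x * Af (yy x) + qq x * Af 0)"
    using jensen_pair[OF convex_A[of q] finSg, of pp qq yy] q1 ppn Wpos WS
    unfolding Af_def ybar_def by simp
  have JB: "W * Bf ybar \<le> (\<Sum>x\<in>Sg. pp x * Bf (yy x) + qq x * Bf 0)"
    using jensen_pair[OF convex_B[of q C] finSg, of pp qq yy] q1 C_nonneg ppn Wpos WS
    unfolding Bf_def ybar_def by simp
  have EI: "hc_expect V E lam (\<lambda>I. real (card I)) / real (card V) = TT / W"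
    by (simp add: hc_expect_def TT_def W_def ZZ_def)
  have L1: "cc * Af ybar \<le> TT / W"
  proof -
    have "cc * (W * Af ybar) \<le> TT" using JA TT_lower cc_pos by (meson mult_left_mono less_imp_le order_trans)
    then show ?thesis using Wpos by (simp add: pos_le_divide_eq algebra_simps)
  qed
  have L2: "cc * (ybar / real \<Delta>) * q powr (- (C / ybar)) \<le> TT / W"
  proof -
    have "cc * (W * Bf ybar) \<le> real \<Delta> * TT" using JB TT_lowerB cc_pos by (meson mult_left_mono less_imp_le order_trans)
    moreover have "real \<Delta> > 0" using Delta by simp
    ultimately show ?thesis using Wpos by (simp add: pos_le_divide_eq Bf_def field_simps)
  qed
  define h where "h = (\<lambda>z. max (lam / (1 + lam) * (1 + lam) powr (- z))
               (lam / (1 + lam) * (z / real \<Delta>) * (1 + lam) powr (- (2 * real \<Delta> ^ 2 / (f * z)))))"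
  have bdd: "bdd_below (h ` {0<..})"
    by (rule bdd_belowI[of _ 0]) (use lpos in \<open>auto simp: h_def max_def\<close>)
  have hle: "(INF z\<in>{0::real<..}. h z) \<le> h z" if "z > 0" for z
    using that by (intro cINF_lower[OF bdd]) auto
  show ?thesis
  proof (cases "ybar > 0")
    case True
    have "h ybar = max (cc * Af ybar) (cc * (ybar / real \<Delta>) * q powr (- (C / ybar)))"
      by (simp add: h_def cc_def Af_def q_def C_def)
    also have "\<dots> \<le> TT / W" using L1 L2 by simp
    finally have "(INF z\<in>{0::real<..}. h z) \<le> hc_expect V E lam (\<lambda>I. real (card I)) / real (card V)"
      using hle[OF True] EI by linarith
    then show ?thesis unfolding h_def .
  next
    case False
    then have "ybar = 0" using ybar0 by simp
    then have "cc \<le> TT / W" using L1 Af0 by simp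
    moreover have "h 1 \<le> cc"
    proof -
      have "(1 + lam) powr (- 1) \<le> (1 + lam) powr 0" using lpos by (intro powr_mono) auto
      then have p1: "(1 + lam) powr (- 1) \<le> 1" using lpos by simp
      have "(1 + lam) powr (- (2 * real \<Delta> ^ 2 / f)) \<le> (1 + lam) powr 0"
        using lpos fpos by (intro powr_mono) auto
      then have p2: "(1 + lam) powr (- (2 * real \<Delta> ^ 2 / f)) \<le> 1" using lpos by simp
      have p3: "1 / real \<Delta> \<le> 1" using Delta by simp
      have p4: "(1 / real \<Delta>) * (1 + lam) powr (- (2 * real \<Delta> ^ 2 / f)) \<le> 1"
        using p2 p3 by (intro mult_le_one) auto
      have a1: "cc * (1 + lam) powr (- 1) \<le> cc" using p1 cc_pos mult_left_mono[OF p1, of cc] by simp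
      have a2: "cc * ((1 / real \<Delta>) * (1 + lam) powr (- (2 * real \<Delta> ^ 2 / f))) \<le> cc"
        using p4 cc_pos mult_left_mono[OF p4, of cc] by simp
      show ?thesis using a1 a2 unfolding h_def cc_def by (simp add: mult.assoc)
    qed
    ultimately have "(INF z\<in>{0::real<..}. h z) \<le> hc_expect V E lam (\<lambda>I. real (card I)) / real (card V)"
      using hle[of 1] EI by linarith
    then show ?thesis unfolding h_def .
  qed
qed

end

theorem lemma3p2:
  fixes V :: "'a set" and E :: "'a \<Rightarrow> 'a \<Rightarrow> bool"
    and f lam \<alpha> \<beta> :: real and \<Delta> :: nat
  assumes G: "fin_graph V E" and nonempty: "V \<noteq> {}"
    and pos: "f > 0" "lam > 0" "\<alpha> > 0" "\<beta> > 0"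
    and Delta: "\<Delta> = max_degree V E" "\<Delta> \<ge> 1"
    and sparse: "\<forall>v\<in>V. real (induced_edges E (nbhd V E v)) \<le> real \<Delta> ^ 2 / f"
  shows "(\<forall>v\<in>V.
            \<alpha> * hc_prob V E lam (\<lambda>I. v \<in> I)
            + \<beta> * hc_expect V E lam (\<lambda>I. real (card (nbhd V E v \<inter> I)))
          \<ge> lam / (1 + lam) *
            (INF z\<in>{0::real..}. \<alpha> * (1 + lam) powr (- z)
               + \<beta> * z * (1 + lam) powr (- (2 * real \<Delta> ^ 2 / (f * z)))))
       \<and> hc_expect V E lam (\<lambda>I. real (card I)) / real (card V)
          \<ge> (INF z\<in>{0::real<..}. max (lam / (1 + lam) * (1 + lam) powr (- z))
               (lam / (1 + lam) * (z / real \<Delta>) * (1 + lam) powr (- (2 * real \<Delta> ^ 2 / (f * z)))))"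
  proof -
  interpret hcsetup V E f lam \<Delta>
    using G nonempty pos Delta sparse by unfold_locales auto
  show ?thesis using part1[OF pos(3) pos(4)] part2 by auto
qed

end
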